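(* Under the setting of the context, if (TS1) holds then the solution $u$ of problem (P) satisfies $u(x,t)\ge0$ for all $(x,t)\in\Omega$.
   Context: A time scale $\mathbb{T}$ is a nonempty closed subset of $\mathbb{R}$; here $\min\mathbb{T}=0$ and $\sup\mathbb{T}=+\infty$. $\sigma(t)=\inf\{s\in\mathbb{T}:s>t\}$ is the forward jump and $\mu_t(t)=\sigma(t)-t$ the graininess; $u^{\Delta_t}$ denotes the (Hilger) delta derivative in $t$. Fix $A>0$, $k>0$, $\mu_x>0$, $\Omega=\mu_x\mathbb{Z}\times\mathbb{T}$. Problem (P): $u^{\Delta_t}(x,t)+k\frac{u(x,t)-u(x-\mu_x,t)}{\mu_x}=0$ for $(x,t)\in\Omega$, $u(0,0)=A$, $u(x,0)=0$ for $x\ne0$. A solution is $u:\Omega\to\mathbb{R}$ with each $u(x,\cdot)$ delta differentiable on $\mathbb{T}$, satisfying (P), and bounded on $\mu_x\mathbb{Z}\times(\mathbb{T}\cap[0,T_0])$ for every $T_0>0$. Condition (TS1): $1-\frac{k\mu_t(t)}{\mu_x}>0$ for all $t\in\mathbb{T}$. *)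

theory Defs
  imports Complex_Main
begin

definition time_scale0 :: "real set \<Rightarrow> bool" where
  "time_scale0 TS \<longleftrightarrow> closed TS \<and> 0 \<in> TS \<and> (\<forall>t\<in>TS. 0 \<le> t) \<and> \<not> bdd_above TS"

definition sigma :: "real set \<Rightarrow> real \<Rightarrow> real" where
  "sigma TS t = Inf {s \<in> TS. s > t}"

definition graininess :: "real set \<Rightarrow> real \<Rightarrow> real" where
  "graininess TS t = sigma TS t - t"

definition has_delta_derivative :: "real set \<Rightarrow> (real \<Rightarrow> real) \<Rightarrow> real \<Rightarrow> real \<Rightarrow> bool" where
  "has_delta_derivative TS f D t \<longleftrightarrow>
     (\<forall>\<epsilon>>0. \<exists>\<delta>>0. \<forall>s\<in>TS. \<bar>s - t\<bar> < \<delta> \<longrightarrow>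
        \<bar>f (sigma TS t) - f s - D * (sigma TS t - s)\<bar> \<le> \<epsilon> * \<bar>sigma TS t - s\<bar>)"

definition grid :: "real \<Rightarrow> real set" where
  "grid h = {h * of_int n | n. True}"

definition is_solution_P ::
  "real set \<Rightarrow> real \<Rightarrow> real \<Rightarrow> real \<Rightarrow> (real \<Rightarrow> real \<Rightarrow> real) \<Rightarrow> bool" where
  "is_solution_P TS A k mux u \<longleftrightarrow>
     (\<forall>x\<in>grid mux. \<forall>t\<in>TS. \<exists>D. has_delta_derivative TS (u x) D t \<and>
         D + k * (u x t - u (x - mux) t) / mux = 0)
   \<and> u 0 0 = A
   \<and> (\<forall>x\<in>grid mux. x \<noteq> 0 \<longrightarrow> u x 0 = 0)
   \<and> (\<forall>T0>0. \<exists>B. \<forall>x\<in>grid mux. \<forall>t\<in>TS. t \<le> T0 \<longrightarrow> \<bar>u x t\<bar> \<le> B)"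

end

theory Submission
  imports Defs "HOL-Analysis.Elementary_Metric_Spaces"
begin

lemma sigma_props:
  assumes ts: "time_scale0 TS" and t: "t \<in> TS"
  shows "sigma TS t \<in> TS" "t \<le> sigma TS t" "\<And>s. s \<in> TS \<Longrightarrow> t < s \<Longrightarrow> sigma TS t \<le> s"
proof -
  let ?S = "{s \<in> TS. s > t}"
  have cl: "closed TS" and nb: "\<not> bdd_above TS" using ts by (auto simp: time_scale0_def)
  have ne: "?S \<noteq> {}"
  proof
    assume "?S = {}"
    then have "\<forall>s\<in>TS. s \<le> t" by auto
    then have "bdd_above TS" by (auto simp: bdd_above_def)
    with nb show False by simp
  qed
  have bb: "bdd_below ?S" by (auto simp: bdd_below_def intro!: exI[of _ t])
  have "Inf ?S \<in> TS" by (rule closed_subset_contains_Inf[OF cl _ ne bb]) auto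
  then show "sigma TS t \<in> TS" by (simp add: sigma_def)
  show "t \<le> sigma TS t" unfolding sigma_def by (rule cInf_greatest[OF ne]) auto
  show "\<And>s. s \<in> TS \<Longrightarrow> t < s \<Longrightarrow> sigma TS t \<le> s" unfolding sigma_def
    by (rule cInf_lower) (use bb in auto)
qed

lemma small_zero:
  fixes x m :: real
  assumes "m \<ge> 0" "\<And>e. e > 0 \<Longrightarrow> \<bar>x\<bar> \<le> e * m"
  shows "x = 0"
proof (rule ccontr)
  assume "x \<noteq> 0"
  then have p: "\<bar>x\<bar> > 0" by simp
  have "\<bar>x\<bar> \<le> (\<bar>x\<bar> / (2*(m+1))) * m" using assms(2)[of "\<bar>x\<bar> / (2*(m+1))"] p assms(1) by simp
  also have "\<dots> < \<bar>x\<bar>" using p assms(1) mult_nonneg_nonneg[OF assms(1), of "\<bar>x\<bar>"] by (simp add: field_simps) (smt (verit) mult_nonneg_nonneg p)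
  finally show False by simp
qed

lemma delta_sigma:
  assumes "has_delta_derivative TS f D t" "t \<in> TS" "t \<le> sigma TS t"
  shows "f (sigma TS t) = f t + (sigma TS t - t) * D"
proof -
  have "f (sigma TS t) - f t - D * (sigma TS t - t) = 0"
  proof (rule small_zero[of "sigma TS t - t"])
    show "0 \<le> sigma TS t - t" using assms(3) by simp
    fix e :: real assume "e > 0"
    then obtain d where "d > 0" "\<forall>s\<in>TS. \<bar>s - t\<bar> < d \<longrightarrow> \<bar>f (sigma TS t) - f s - D * (sigma TS t - s)\<bar> \<le> e * \<bar>sigma TS t - s\<bar>"
      using assms(1) unfolding has_delta_derivative_def by blast
    then have "\<bar>f (sigma TS t) - f t - D * (sigma TS t - t)\<bar> \<le> e * \<bar>sigma TS t - t\<bar>" using assms(2) by auto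
    then show "\<bar>f (sigma TS t) - f t - D * (sigma TS t - t)\<bar> \<le> e * (sigma TS t - t)" using assms(3) by simp
  qed
  then show ?thesis by (simp add: algebra_simps)
qed

lemma delta_cont:
  assumes "has_delta_derivative TS f D t" "t \<in> TS" "t \<le> sigma TS t"
  shows "(f \<longlongrightarrow> f t) (at t within TS)"
proof -
  define m where "m = sigma TS t - t"
  have m0: "m \<ge> 0" using assms(3) by (simp add: m_def)
  have fs: "f (sigma TS t) = f t + m * D" using delta_sigma[OF assms] by (simp add: m_def)
  show ?thesis unfolding tendsto_iff eventually_at
  proof (intro allI impI)
    fix e :: real assume e: "e > 0"
    define ep where "ep = e / (2*(m+1))"
    have ep: "ep > 0" using e m0 by (simp add: ep_def)
    obtain d where d: "d > 0" "\<forall>s\<in>TS. \<bar>s - t\<bar> < d \<longrightarrow> \<bar>f (sigma TS t) - f s - D * (sigma TS t - s)\<bar> \<le> ep * \<bar>sigma TS t - s\<bar>"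
      using assms(1) ep unfolding has_delta_derivative_def by blast
    define d2 where "d2 = min d (min 1 (e / (2*(\<bar>D\<bar>+1))))"
    have d2: "d2 > 0" using d e by (simp add: d2_def)
    show "\<exists>d>0. \<forall>x\<in>TS. x \<noteq> t \<and> dist x t < d \<longrightarrow> dist (f x) (f t) < e"
    proof (intro exI[of _ d2] conjI d2 ballI impI)
      fix s assume s: "s \<in> TS" "s \<noteq> t \<and> dist s t < d2"
      have st: "\<bar>s - t\<bar> < d2" using s by (simp add: dist_real_def)
      have st1: "\<bar>s - t\<bar> < 1" and std: "\<bar>s - t\<bar> < d" and ste: "\<bar>s - t\<bar> < e / (2*(\<bar>D\<bar>+1))"
        using st by (auto simp: d2_def)
      have E: "\<bar>f (sigma TS t) - f s - D * (sigma TS t - s)\<bar> \<le> ep * \<bar>sigma TS t - s\<bar>"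
        using d(2) s(1) std by simp
      have eq: "f s - f t = D * (s - t) - (f (sigma TS t) - f s - D * (sigma TS t - s))"
        using fs by (simp add: m_def algebra_simps)
      have "\<bar>sigma TS t - s\<bar> \<le> m + 1" using st1 m0 by (simp add: m_def abs_le_iff abs_less_iff)
      then have "ep * \<bar>sigma TS t - s\<bar> \<le> ep * (m + 1)" using ep by (intro mult_left_mono) auto
      also have "ep * (m + 1) = e / 2" using m0 by (simp add: ep_def field_simps)
      finally have E2: "ep * \<bar>sigma TS t - s\<bar> \<le> e / 2" .
      have "\<bar>D * (s - t)\<bar> = \<bar>D\<bar> * \<bar>s - t\<bar>" by (simp add: abs_mult)
      also have "\<dots> \<le> \<bar>D\<bar> * (e / (2*(\<bar>D\<bar>+1)))" using ste by (intro mult_left_mono) auto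
      also have "\<dots> < e / 2" using e by (simp add: field_simps)
      finally have "\<bar>D * (s - t)\<bar> < e/2" .
      then show "dist (f s) (f t) < e" using eq E E2 by (simp add: dist_real_def)
    qed
  qed
qed


lemma ts_induct:
  fixes h :: "real \<Rightarrow> real"
  assumes ts: "time_scale0 TS"
    and h0: "h 0 \<ge> 0"
    and cont: "\<And>t. t \<in> TS \<Longrightarrow> t \<le> T0 \<Longrightarrow> (h \<longlongrightarrow> h t) (at t within TS)"
    and rs: "\<And>t. t \<in> TS \<Longrightarrow> t < sigma TS t \<Longrightarrow> sigma TS t \<le> T0 \<Longrightarrow> h t \<ge> 0 \<Longrightarrow> h (sigma TS t) \<ge> 0"
    and rd: "\<And>t. t \<in> TS \<Longrightarrow> sigma TS t = t \<Longrightarrow> t < T0 \<Longrightarrow> h t \<ge> 0 \<Longrightarrow> \<exists>d>0. \<forall>s\<in>TS. t < s \<and> s < t + d \<longrightarrow> h s \<ge> 0"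
  shows "\<forall>t\<in>TS. t \<le> T0 \<longrightarrow> h t \<ge> 0"
proof (rule ccontr)
  assume nt: "\<not> (\<forall>t\<in>TS. t \<le> T0 \<longrightarrow> h t \<ge> 0)"
  define Bad where "Bad = {t \<in> TS. t \<le> T0 \<and> h t < 0}"
  have ne: "Bad \<noteq> {}" using nt by (auto simp: Bad_def)
  have cl: "closed TS" and nn: "\<forall>t\<in>TS. 0 \<le> t" and z: "0 \<in> TS" using ts by (auto simp: time_scale0_def)
  have bb: "bdd_below Bad" using nn by (auto simp: Bad_def bdd_below_def)
  define t0 where "t0 = Inf Bad"
  have t0TS: "t0 \<in> TS" unfolding t0_def by (rule closed_subset_contains_Inf[OF cl _ ne bb]) (auto simp: Bad_def)
  have lowb: "\<And>b. b \<in> Bad \<Longrightarrow> t0 \<le> b" unfolding t0_def by (rule cInf_lower[OF _ bb])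
  obtain b0 where b0: "b0 \<in> Bad" using ne by auto
  have t0T: "t0 \<le> T0" using lowb[OF b0] b0 by (auto simp: Bad_def)
  have below: "\<And>s. s \<in> TS \<Longrightarrow> s < t0 \<Longrightarrow> h s \<ge> 0"
  proof -
    fix s assume "s \<in> TS" "s < t0"
    then have "s \<notin> Bad" using lowb by force
    then show "h s \<ge> 0" using \<open>s \<in> TS\<close> \<open>s < t0\<close> t0T by (auto simp: Bad_def)
  qed
  show False
  proof (cases "h t0 < 0")
    case True
    have t0pos: "t0 > 0"
    proof -
      have "t0 \<ge> 0" using nn t0TS by auto
      moreover have "t0 \<noteq> 0" using True h0 by auto
      ultimately show ?thesis by simp
    qed
    show False
    proof (cases "\<forall>d>0. \<exists>s\<in>TS. t0 - d < s \<and> s < t0")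
      case True2: True
      have "\<exists>d>0. \<forall>s\<in>TS. s \<noteq> t0 \<and> dist s t0 < d \<longrightarrow> dist (h s) (h t0) < - h t0"
        using cont[OF t0TS t0T] True unfolding tendsto_iff eventually_at by simp
      then obtain d where d: "d > 0" "\<forall>s\<in>TS. s \<noteq> t0 \<and> dist s t0 < d \<longrightarrow> dist (h s) (h t0) < - h t0"
        by blast
      obtain s where s: "s \<in> TS" "t0 - d < s" "s < t0" using True2 d(1) by blast
      have "dist (h s) (h t0) < - h t0" using d(2) s by (simp add: dist_real_def)
      moreover have "h s \<ge> 0" using below s by auto
      ultimately show False by (simp add: dist_real_def)
    next
      case False
      then obtain d where d: "d > 0" "\<forall>s\<in>TS. s < t0 \<longrightarrow> s \<le> t0 - d" by (metis not_less)
      define L where "L = {s \<in> TS. s < t0}"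
      have Lne: "L \<noteq> {}" using z t0pos by (auto simp: L_def)
      have Lb: "bdd_above L" by (auto simp: L_def bdd_above_def intro!: exI[of _ t0])
      define r where "r = Sup L"
      have rTS: "r \<in> TS" unfolding r_def by (rule closed_subset_contains_Sup[OF cl _ Lne Lb]) (auto simp: L_def)
      have rle: "r \<le> t0 - d" unfolding r_def by (rule cSup_least[OF Lne]) (use d in \<open>auto simp: L_def\<close>)
      have upper: "\<And>s. s \<in> L \<Longrightarrow> s \<le> r" unfolding r_def by (rule cSup_upper[OF _ Lb])
      have sig: "sigma TS r = t0"
      proof (rule antisym)
        show "sigma TS r \<le> t0" using sigma_props(3)[OF ts rTS t0TS] rle d(1) by simp
        show "t0 \<le> sigma TS r" unfolding sigma_def
        proof (rule cInf_greatest)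
          show "{s \<in> TS. r < s} \<noteq> {}" using t0TS rle d(1) by auto
          fix s assume "s \<in> {s \<in> TS. r < s}"
          then show "t0 \<le> s" using upper[of s] by (force simp: L_def)
        qed
      qed
      have "h r \<ge> 0" using below[OF rTS] rle d(1) by simp
      then have "h t0 \<ge> 0" using rs[OF rTS] sig rle d(1) t0T by simp
      with True show False by simp
    qed
  next
    case False
    then have b0gt: "t0 < b0" using lowb[OF b0] b0 by (cases "t0 = b0") (auto simp: Bad_def)
    then have t0lt: "t0 < T0" using b0 by (auto simp: Bad_def)
    have sig: "sigma TS t0 = t0"
    proof (rule ccontr)
      assume "sigma TS t0 \<noteq> t0"
      then have gt: "sigma TS t0 > t0" using sigma_props(2)[OF ts t0TS] by simp
      have "sigma TS t0 \<le> Inf Bad"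
      proof (rule cInf_greatest[OF ne])
        fix b assume b: "b \<in> Bad"
        have "b \<noteq> t0" using b False by (auto simp: Bad_def)
        then have "t0 < b" using lowb[OF b] by simp
        then show "sigma TS t0 \<le> b" using sigma_props(3)[OF ts t0TS] b by (auto simp: Bad_def)
      qed
      with gt show False by (simp add: t0_def)
    qed
    obtain d where d: "d > 0" "\<forall>s\<in>TS. t0 < s \<and> s < t0 + d \<longrightarrow> h s \<ge> 0"
      using rd[OF t0TS sig t0lt] False by force
    obtain b where b: "b \<in> Bad" "b < t0 + d" using cInf_lessD[OF ne, of "t0 + d"] d(1) by (auto simp: t0_def)
    have "b \<noteq> t0" using b False by (auto simp: Bad_def)
    then have "t0 < b" using lowb[OF b(1)] by simp
    then have "h b \<ge> 0" using d(2) b by (auto simp: Bad_def)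
    then show False using b by (auto simp: Bad_def)
  qed
qed


lemma grid_minus: "x \<in> grid h \<Longrightarrow> x - h \<in> grid h"
proof -
  assume "x \<in> grid h"
  then obtain n where "x = h * of_int n" by (auto simp: grid_def)
  then have "x - h = h * of_int (n - 1)" by (simp add: algebra_simps)
  then show ?thesis unfolding grid_def by blast
qed

lemma step:
  assumes ts: "time_scale0 TS" and k: "k > 0" and mux: "mux > 0"
    and TS1: "\<forall>t\<in>TS. 1 - k * graininess TS t / mux > 0"
    and deriv: "\<forall>x\<in>grid mux. \<forall>t\<in>TS. \<exists>D. has_delta_derivative TS (u x) D t \<and> D + k * (u x t - u (x - mux) t) / mux = 0"
    and init: "\<forall>x\<in>grid mux. u x 0 \<ge> 0"
    and K: "K > 0" and bnd: "\<forall>y\<in>grid mux. \<forall>s\<in>TS. s \<le> T0 \<longrightarrow> - u y s \<le> K * exp (2*(k/mux)*s)"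
    and x: "x \<in> grid mux"
  shows "\<forall>s\<in>TS. s \<le> T0 \<longrightarrow> - u x s \<le> (3/4*K) * exp (2*(k/mux)*s)"
proof -
  define a where "a = k / mux"
  have a: "a > 0" using k mux by (simp add: a_def)
  define L where "L = 3/4*K"
  have L: "L > 0" using K by (simp add: L_def)
  define f where "f = u x"
  define g where "g = u (x - mux)"
  have xg: "x - mux \<in> grid mux" using grid_minus[OF x] .
  have gb: "\<And>s. s \<in> TS \<Longrightarrow> s \<le> T0 \<Longrightarrow> g s \<ge> - K * exp (2*a*s)"
    using bnd xg by (force simp: g_def a_def)
  have der: "\<And>t. t \<in> TS \<Longrightarrow> has_delta_derivative TS f (- (a * (f t - g t))) t"
  proof -
    fix t assume t: "t \<in> TS"
    obtain D where D: "has_delta_derivative TS (u x) D t" "D + k * (u x t - u (x - mux) t) / mux = 0"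
      using deriv x t by blast
    have "D = - (a * (f t - g t))" using D(2) by (simp add: a_def f_def g_def field_simps)
    then show "has_delta_derivative TS f (- (a * (f t - g t))) t" using D(1) by (simp add: f_def)
  qed
  define h where "h = (\<lambda>s. f s + L * exp (2*a*s))"
  have main: "\<forall>t\<in>TS. t \<le> T0 \<longrightarrow> h t \<ge> 0"
  proof (rule ts_induct[OF ts])
    show "h 0 \<ge> 0" using init x L by (simp add: h_def f_def)
  next
    fix t assume t: "t \<in> TS" "t \<le> T0"
    have "(f \<longlongrightarrow> f t) (at t within TS)"
      using delta_cont[OF der[OF t(1)] t(1) sigma_props(2)[OF ts t(1)]] .
    then show "(h \<longlongrightarrow> h t) (at t within TS)" unfolding h_def
      by (intro tendsto_intros) auto
  next
    fix t assume t: "t \<in> TS" and lt: "t < sigma TS t" and sT: "sigma TS t \<le> T0" and ht: "h t \<ge> 0"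
    define m where "m = sigma TS t - t"
    have m: "m > 0" using lt by (simp add: m_def)
    have am: "1 - a * m > 0" using TS1 t by (simp add: graininess_def m_def a_def)
    define E where "E = exp (2*a*t)"
    have E: "E > 0" by (simp add: E_def)
    have fs: "f (sigma TS t) = f t + m * (- (a * (f t - g t)))"
      using delta_sigma[OF der[OF t] t sigma_props(2)[OF ts t]] by (simp add: m_def)
    have fs2: "f (sigma TS t) = (1 - a*m) * f t + (a*m) * g t" using fs by (simp add: algebra_simps)
    have ft: "f t \<ge> - L * E" using ht by (simp add: h_def E_def)
    have gt: "g t \<ge> - K * E" using gb[OF t] lt sT by (simp add: E_def)
    have e1: "(1 - a*m) * f t \<ge> (1 - a*m) * (- L * E)" using am ft by (intro mult_left_mono) auto
    have e2: "(a*m) * g t \<ge> (a*m) * (- K * E)" using a m gt by (intro mult_left_mono) auto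
    have "2*a*sigma TS t = 2*a*t + 2*a*m" by (simp add: m_def algebra_simps)
    then have ex: "exp (2*a*sigma TS t) = E * exp (2*a*m)" by (simp add: E_def exp_add)
    have ex2: "exp (2*a*m) \<ge> 1 + 2*a*m" by (rule exp_ge_add_one_self)
    have e3: "L * exp (2*a*sigma TS t) \<ge> L * E * (1 + 2*a*m)" unfolding ex
      using L E ex2 by (simp add: mult_left_mono)
    have key: "(1 - a*m) * (- L * E) + (a*m) * (- K * E) + L * E * (1 + 2*a*m) = a*m*E*(3*L - K)"
      by (simp add: algebra_simps)
    have "a*m*E*(3*L - K) \<ge> 0" using a m E K by (simp add: L_def)
    then show "h (sigma TS t) \<ge> 0" unfolding h_def fs2 using e1 e2 e3 key by linarith
  next
    fix t assume t: "t \<in> TS" and sig: "sigma TS t = t" and tT: "t < T0" and ht: "h t \<ge> 0"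
    show "\<exists>d>0. \<forall>s\<in>TS. t < s \<and> s < t + d \<longrightarrow> h s \<ge> 0"
    proof (cases "h t > 0")
      case True
      have "(h \<longlongrightarrow> h t) (at t within TS)" unfolding h_def
        using delta_cont[OF der[OF t] t sigma_props(2)[OF ts t]] by (intro tendsto_intros) auto
      then have "\<exists>d>0. \<forall>s\<in>TS. s \<noteq> t \<and> dist s t < d \<longrightarrow> dist (h s) (h t) < h t"
        using True unfolding tendsto_iff eventually_at by simp
      then obtain d where d: "d > 0" "\<forall>s\<in>TS. s \<noteq> t \<and> dist s t < d \<longrightarrow> dist (h s) (h t) < h t" by blast
      show ?thesis
      proof (intro exI[of _ d] conjI d(1) ballI impI)
        fix s assume s: "s \<in> TS" "t < s \<and> s < t + d"
        then have "dist (h s) (h t) < h t" using d(2) by (auto simp: dist_real_def)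
        then show "h s \<ge> 0" by (simp add: dist_real_def)
      qed
    next
      case False
      then have h0: "h t = 0" using ht by simp
      define E where "E = exp (2*a*t)"
      have E: "E > 0" by (simp add: E_def)
      have ft: "f t = - L * E" using h0 by (simp add: h_def E_def)
      have gt: "g t \<ge> - K * E" using gb[OF t] tT by (simp add: E_def)
      define D where "D = - (a * (f t - g t))"
      have Dge: "D \<ge> a*L*E - a*K*E"
      proof -
        have "a * g t \<ge> a * (- K * E)" using a gt by (intro mult_left_mono) auto
        then show ?thesis by (simp add: D_def ft algebra_simps)
      qed
      define c where "c = a*E*(3*L - K)"
      have c: "c > 0" using a E K by (simp add: c_def L_def)
      obtain d where d: "d > 0" "\<forall>s\<in>TS. \<bar>s - t\<bar> < d \<longrightarrow> \<bar>f (sigma TS t) - f s - D * (sigma TS t - s)\<bar> \<le> (c/2) * \<bar>sigma TS t - s\<bar>"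
        using der[OF t] c unfolding has_delta_derivative_def D_def by (meson half_gt_zero)
      show ?thesis
      proof (intro exI[of _ d] conjI d(1) ballI impI)
        fix s assume s: "s \<in> TS" "t < s \<and> s < t + d"
        have "\<bar>f t - f s - D * (t - s)\<bar> \<le> (c/2) * \<bar>t - s\<bar>" using d(2) s sig by auto
        moreover have "\<bar>t - s\<bar> = s - t" using s by simp
        ultimately have "\<bar>f t - f s - D * (t - s)\<bar> \<le> (c/2) * (s - t)" by simp
        then have A: "f t - f s - D * (t - s) \<le> (c/2) * (s - t)" by (metis abs_le_iff)
        have fsb: "f s \<ge> f t + D * (s - t) - (c/2) * (s - t)" using A unfolding right_diff_distrib by linarith
        have "2*a*s = 2*a*t + 2*a*(s-t)" by (simp add: algebra_simps)
        then have exs: "exp (2*a*s) = E * exp (2*a*(s-t))" by (metis E_def exp_add)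
        have "exp (2*a*(s-t)) \<ge> 1 + 2*a*(s-t)" by (rule exp_ge_add_one_self)
        then have e3: "L * exp (2*a*s) \<ge> L * E * (1 + 2*a*(s-t))" unfolding exs
          using L E by (simp add: mult_left_mono)
        have e4: "D * (s - t) \<ge> (a*L*E - a*K*E) * (s - t)" using Dge s by (intro mult_right_mono) auto
        have key: "- L * E + (a*L*E - a*K*E) * (s - t) - (c/2) * (s - t) + L * E * (1 + 2*a*(s-t)) = (c/2) * (s - t)"
          by (simp add: c_def field_simps)
        have "(c/2) * (s - t) > 0" using c s by simp
        then show "h s \<ge> 0" unfolding h_def using fsb e3 e4 key ft by linarith
      qed
    qed
  qed
  show ?thesis
  proof (intro ballI impI)
    fix s assume "s \<in> TS" "s \<le> T0"
    then have "h s \<ge> 0" using main by blast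
    then show "- u x s \<le> (3/4*K) * exp (2*(k/mux)*s)" by (simp add: h_def f_def L_def a_def)
  qed
qed


theorem mainTheorem9:
  fixes TS :: "real set" and A k mux :: real and u :: "real \<Rightarrow> real \<Rightarrow> real"
  assumes "time_scale0 TS"
    and "A > 0" and "k > 0" and "mux > 0"
    and TS1: "\<forall>t\<in>TS. 1 - k * graininess TS t / mux > 0"
    and "is_solution_P TS A k mux u"
  shows "\<forall>x\<in>grid mux. \<forall>t\<in>TS. u x t \<ge> 0"
proof (intro ballI)
  note ts = assms(1) and k = assms(3) and mux = assms(4)
  have deriv: "\<forall>x\<in>grid mux. \<forall>t\<in>TS. \<exists>D. has_delta_derivative TS (u x) D t \<and> D + k * (u x t - u (x - mux) t) / mux = 0"
    and u00: "u 0 0 = A" and i0: "\<forall>x\<in>grid mux. x \<noteq> 0 \<longrightarrow> u x 0 = 0"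
    and bd: "\<forall>T0>0. \<exists>B. \<forall>x\<in>grid mux. \<forall>t\<in>TS. t \<le> T0 \<longrightarrow> \<bar>u x t\<bar> \<le> B"
    using assms(6) unfolding is_solution_P_def by auto
  have init: "\<forall>x\<in>grid mux. u x 0 \<ge> 0"
    using u00 i0 assms(2) by (metis order.refl less_imp_le)
  have nn: "\<forall>t\<in>TS. 0 \<le> t" using ts by (simp add: time_scale0_def)
  fix x t assume x: "x \<in> grid mux" and t: "t \<in> TS"
  define T0 where "T0 = t + 1"
  have T0: "T0 > 0" using nn t by (force simp: T0_def)
  obtain B where B: "\<forall>x\<in>grid mux. \<forall>t\<in>TS. t \<le> T0 \<longrightarrow> \<bar>u x t\<bar> \<le> B" using bd T0 by blast
  define K0 where "K0 = \<bar>B\<bar> + 1"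
  have K0: "K0 > 0" by (simp add: K0_def)
  have claim: "\<forall>y\<in>grid mux. \<forall>s\<in>TS. s \<le> T0 \<longrightarrow> - u y s \<le> (K0*(3/4)^n) * exp (2*(k/mux)*s)" for n
  proof (induction n)
    case 0
    show ?case
    proof (intro ballI impI)
      fix y s assume y: "y \<in> grid mux" and s: "s \<in> TS" "s \<le> T0"
      have "- u y s \<le> K0" using B y s by (force simp: K0_def)
      also have "K0 \<le> K0 * exp (2*(k/mux)*s)"
      proof -
        have "2*(k/mux)*s \<ge> 0" using k mux nn s by simp
        then have "exp (2*(k/mux)*s) \<ge> 1" by simp
        then show ?thesis using K0 by simp
      qed
      finally show "- u y s \<le> (K0*(3/4)^0) * exp (2*(k/mux)*s)" by simp
    qed
  next
    case (Suc n)
    have "\<forall>s\<in>TS. s \<le> T0 \<longrightarrow> - u y s \<le> (3/4*(K0*(3/4)^n)) * exp (2*(k/mux)*s)" if y: "y \<in> grid mux" for y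
      by (rule step[OF ts k mux TS1 deriv init _ Suc y]) (use K0 in simp)
    then show ?case by (simp add: mult_ac)
  qed
  show "u x t \<ge> 0"
  proof (rule ccontr)
    assume "\<not> u x t \<ge> 0"
    then have v: "- u x t > 0" by simp
    define W where "W = K0 * exp (2*(k/mux)*t)"
    have W: "W > 0" using K0 by (simp add: W_def)
    obtain n where n: "(3/4::real)^n < (- u x t) / W"
    proof -
      have "(- u x t) / W > 0" using v W by (simp add: divide_neg_pos)
      then show ?thesis using real_arch_pow_inv[of "(- u x t) / W" "3/4::real"] that by auto
    qed
    have "- u x t \<le> (K0*(3/4)^n) * exp (2*(k/mux)*t)" using claim x t by (simp add: T0_def)
    also have "\<dots> = (3/4)^n * W" by (simp add: W_def)
    also have "\<dots> < ((- u x t) / W) * W" using n W by (intro mult_strict_right_mono) auto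
    also have "\<dots> = - u x t" using W by simp
    finally show False by simp
  qed
qed

end
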